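(* Let $N_f\ge 1$ and $N_c$ be integers with $1\le N_c\le N_f$, let $p_1,\dots,p_{N_f}>0$ with $\sum_f p_f=1$, and let $\alpha>2$, $M_1\ge1$ (integer), $\lambda_1,\lambda_2,\lambda_u,P_1,P_2,B_1,B_2,W,R_0>0$. Put $M_{12}=M_1$, $\lambda_{12}=\lambda_1/\lambda_2$, $P_{12}=P_1/P_2$, $B_{12}=B_1/B_2$. Let $\mathcal F=\{\mathbf q=(q_f)_{f=1}^{N_f}\in[0,1]^{N_f}:\sum_f q_f\le N_c\}$ and $\mathcal P^o=\max_{\mathbf q\in\mathcal F}\sum_{f=1}^{N_f}\frac{p_fq_f}{\lambda_{12}(P_{12}B_{12})^{2/\alpha}+q_f}$. Define $\bar\gamma=2^{\frac{R_0}{W}\left(1+\frac{1.28\lambda_u\mathcal P^o}{\lambda_2}\right)}-1$, $\bar p=1-\big(1+\frac{\mathcal P^o\lambda_u}{3.5\lambda_2}\big)^{-3.5}$, $$\mathsf C_1(x)=\lambda_{12}(P_{12}B_{12})^{2/\alpha}\,{}_2F_1\!\Big[-\tfrac2\alpha,M_1;1-\tfrac2\alpha;-\tfrac{x}{M_{12}B_{12}}\Big],\quad \mathsf C_2(x)=\Gamma(1-\tfrac2\alpha)\Gamma(1+\tfrac2\alpha)x^{2/\alpha},$$ $$\mathsf C_3(x)={}_2F_1\!\Big[-\tfrac2\alpha,1;1-\tfrac2\alpha;-x\Big]-\mathsf C_2(x)-1,$$ and set $c_1=\mathsf C_1(\bar\gamma)+\bar p\,\mathsf C_2(\bar\gamma)$,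 $c_2=\bar p\,\mathsf C_3(\bar\gamma)+1$. Consider the function $$\underline p_{{\rm s},2}(\mathbf q)=\sum_{f=1}^{N_f}\frac{p_fq_f}{c_1+c_2q_f}.$$ For $\nu>0$ let $q_f(\nu)=\Big[\frac{\sqrt{c_1}}{\sqrt\nu\,c_2}\sqrt{p_f}-\frac{c_1}{c_2}\Big]_0^1$. Then there exists $\nu>0$ with $\sum_{f=1}^{N_f}q_f(\nu)=N_c$, and for any such $\nu$ the vector $(q_f(\nu))_{f=1}^{N_f}$ maximizes $\underline p_{{\rm s},2}$ over $\mathcal F$.
   Context: $[x]_0^1=\max\{\min\{x,1\},0\}$. ${}_2F_1$ denotes the Gauss hypergeometric function and $\Gamma$ the Gamma function. In the paper, $\underline p_{{\rm s},2}$ is a lower bound on the success probability contributed by the helper tier, $\mathcal P^o$ the maximal helper-tier association probability, $\bar\gamma$ and $\bar p$ the resulting upper bounds on the equivalent SINR threshold and helper activity probability; the vector $(q_f)$ is the helper caching probability vector, subject to the cache size constraint $\sum_f q_f\le N_c$. *)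

theory Defs
  imports "HOL-Analysis.Analysis"
begin

definition clip01 :: "real \<Rightarrow> real" where
  "clip01 x = max (min x 1) 0"

definition hyp2F1_series :: "real \<Rightarrow> real \<Rightarrow> real \<Rightarrow> real \<Rightarrow> real" where
  "hyp2F1_series a b c z =
     (\<Sum>n. pochhammer a n * pochhammer b n / (pochhammer c n * fact n) * z ^ n)"

text \<open>Gauss hypergeometric function 2F1[a,b;c;z] on real arguments z < 1:
  the power series for |z| < 1, and its standard analytic continuation to
  z \<le> -1 via the Pfaff transformation
  2F1[a,b;c;z] = (1-z)^(-a) 2F1[a,c-b;c;z/(z-1)]  (here z/(z-1) \<in> [1/2,1)).
  Values for z \<ge> 1 are not needed and left as 0.\<close>
definition hyp2F1 :: "real \<Rightarrow> real \<Rightarrow> real \<Rightarrow> real \<Rightarrow> real" where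
  "hyp2F1 a b c z =
     (if \<bar>z\<bar> < 1 then hyp2F1_series a b c z
      else if z \<le> -1 then (1 - z) powr (-a) * hyp2F1_series a (c - b) c (z / (z - 1))
      else 0)"

definition feasible_set :: "nat \<Rightarrow> nat \<Rightarrow> (nat \<Rightarrow> real) set" where
  "feasible_set Nf Nc = {q. (\<forall>f\<in>{1..Nf}. 0 \<le> q f \<and> q f \<le> 1) \<and> (\<Sum>f=1..Nf. q f) \<le> real Nc}"

end

theory Submission
  imports Defs
begin

lemma pw_summable:
  fixes \<delta> :: real and \<alpha> :: "nat \<Rightarrow> real"
  assumes d: "0<\<delta>" "\<delta><1"
    and sA: "\<And>y. \<bar>y\<bar> < 1 \<Longrightarrow> summable (\<lambda>n. \<alpha> n * y^n)"
    and y: "\<bar>y\<bar> < 1"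
  shows "summable (\<lambda>n. \<alpha> n / (real n + 1 - \<delta>) * y^n)"
proof -
  define y' where "y' = (\<bar>y\<bar>+1)/2"
  have "summable (\<lambda>n. \<alpha> n * y'^n)" using sA y unfolding y'_def by auto
  moreover have "norm y < norm y'" using y unfolding y'_def by auto
  ultimately have s: "summable (\<lambda>n. norm (\<alpha> n * y^n))" by (rule powser_insidea)
  hence s2: "summable (\<lambda>n. norm (\<alpha> n * y^n) / (1-\<delta>))" by (rule summable_divide)
  show ?thesis
  proof (rule summable_comparison_test'[OF s2])
    fix n :: nat
    have pos: "real n + 1 - \<delta> \<ge> 1 - \<delta>" by simp
    have "norm (\<alpha> n / (real n + 1 - \<delta>) * y^n) = norm (\<alpha> n * y^n) / (real n + 1 - \<delta>)"
      using d by (simp add: abs_mult)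
    also have "\<dots> \<le> norm (\<alpha> n * y^n) / (1-\<delta>)"
      using d pos by (intro divide_left_mono) auto
    finally show "norm (\<alpha> n / (real n + 1 - \<delta>) * y^n) \<le> norm (\<alpha> n * y^n) / (1-\<delta>)" .
  qed
qed

lemma pw_deriv:
  fixes \<delta> :: real and \<alpha> :: "nat \<Rightarrow> real" and A :: "real \<Rightarrow> real"
  assumes d: "0<\<delta>" "\<delta><1"
    and sA: "\<And>y. \<bar>y\<bar> < 1 \<Longrightarrow> (\<lambda>n. \<alpha> n * y^n) sums A y"
    and y: "0 < y" "y < 1"
  shows "((\<lambda>y. y powr (1-\<delta>) * (\<Sum>n. \<alpha> n / (real n + 1 - \<delta>) * y^n)) has_real_derivative
            y powr (-\<delta>) * A y) (at y)"
proof -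
  define c where "c = (\<lambda>n. \<alpha> n / (real n + 1 - \<delta>))"
  have sc: "\<And>z. norm z < 1 \<Longrightarrow> summable (\<lambda>n. c n * z^n)"
    unfolding c_def using pw_summable[OF d] sA sums_summable by (metis real_norm_def)
  have hd: "((\<lambda>z. \<Sum>n. c n * z^n) has_real_derivative (\<Sum>n. diffs c n * y^n)) (at y)"
    by (rule termdiffs_strong'[where K=1]) (use sc y in auto)
  have sum1: "(\<lambda>n. c n * y^n) sums (\<Sum>n. c n * y^n)" using sc y by (simp add: summable_sums)
  have sd: "summable (\<lambda>n. diffs c n * y^n)"
    by (rule termdiff_converges[where K=1]) (use sc y in auto)
  hence "(\<lambda>n. y * (diffs c n * y^n)) sums (y * (\<Sum>n. diffs c n * y^n))"
    by (intro sums_mult summable_sums)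
  hence "(\<lambda>n. (\<lambda>m. real m * c m * y^m) (Suc n)) sums (y * (\<Sum>n. diffs c n * y^n))"
    by (simp add: diffs_def algebra_simps)
  hence sum2: "(\<lambda>m. real m * c m * y^m) sums (y * (\<Sum>n. diffs c n * y^n))"
    by (subst (asm) sums_Suc_iff) simp
  have "(\<lambda>n. (1-\<delta>) * (c n * y^n) + real n * c n * y^n) sums
          ((1-\<delta>) * (\<Sum>n. c n * y^n) + y * (\<Sum>n. diffs c n * y^n))"
    by (intro sums_add sums_mult sum1 sum2)
  moreover have "(\<lambda>n. (1-\<delta>) * (c n * y^n) + real n * c n * y^n) = (\<lambda>n. \<alpha> n * y^n)"
  proof
    fix n
    have "real n + 1 - \<delta> \<noteq> 0" using d by linarith
    have "(1-\<delta>) * (c n * y^n) + real n * c n * y^n = ((real n + 1 - \<delta>) * c n) * y^n"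
      by (simp add: algebra_simps)
    also have "(real n + 1 - \<delta>) * c n = \<alpha> n" unfolding c_def using \<open>real n + 1 - \<delta> \<noteq> 0\<close> by simp
    finally show "(1-\<delta>) * (c n * y^n) + real n * c n * y^n = \<alpha> n * y^n" .
  qed
  ultimately have eqA: "(1-\<delta>) * (\<Sum>n. c n * y^n) + y * (\<Sum>n. diffs c n * y^n) = A y"
    using sA[of y] y sums_unique2 by auto
  have "((\<lambda>y. y powr (1-\<delta>) * (\<Sum>n. c n * y^n)) has_real_derivative
      ((1-\<delta>) * y powr (1-\<delta>-1) * (\<Sum>n. c n * y^n) + y powr (1-\<delta>) * (\<Sum>n. diffs c n * y^n))) (at y)"
    using y by (auto intro!: derivative_eq_intros hd)
  moreover have "(1-\<delta>) * y powr (1-\<delta>-1) * (\<Sum>n. c n * y^n) + y powr (1-\<delta>) * (\<Sum>n. diffs c n * y^n)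
      = y powr (-\<delta>) * A y"
  proof -
    have "y powr (1-\<delta>) = y powr (-\<delta> + 1)" by simp
    also have "\<dots> = y powr (-\<delta>) * y powr 1" by (rule powr_add)
    also have "\<dots> = y powr (-\<delta>) * y" using y by simp
    finally have "y powr (1-\<delta>) = y powr (-\<delta>) * y" .
    hence "(1-\<delta>) * y powr (1-\<delta>-1) * (\<Sum>n. c n * y^n) + y powr (1-\<delta>) * (\<Sum>n. diffs c n * y^n)
      = y powr (-\<delta>) * ((1-\<delta>) * (\<Sum>n. c n * y^n) + y * (\<Sum>n. diffs c n * y^n))"
      by (simp add: algebra_simps)
    thus ?thesis by (simp only: eqA)
  qed
  ultimately show ?thesis unfolding c_def by simp
qed

lemma isCont_tendsto_within: "isCont f x \<Longrightarrow> (f \<longlongrightarrow> f x) (at x within S)"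
  using continuous_at_imp_continuous_within continuous_within by blast

lemma cont_Icc_from_deriv:
  fixes K :: "real \<Rightarrow> real"
  assumes b: "0 < b"
    and lim0: "(K \<longlongrightarrow> K 0) (at_right 0)"
    and der: "\<And>x. 0 < x \<Longrightarrow> x \<le> b \<Longrightarrow> isCont K x"
  shows "continuous_on {0..b} K"
proof (rule continuous_on_IccI[OF lim0 _ _ b])
  show "(K \<longlongrightarrow> K b) (at_left b)" using der[of b] b by (intro isCont_tendsto_within) auto
  fix x assume "0 < x" "x < b"
  thus "(K \<longlongrightarrow> K x) (at x)" using der[of x] by (simp add: isCont_def)
qed

lemma pw_cont:
  fixes \<delta> :: real and \<alpha> :: "nat \<Rightarrow> real" and A :: "real \<Rightarrow> real"
  assumes d: "0<\<delta>" "\<delta><1"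
    and sA: "\<And>y. \<bar>y\<bar> < 1 \<Longrightarrow> (\<lambda>n. \<alpha> n * y^n) sums A y"
    and b: "0 < b" "b < 1"
  shows "continuous_on {0..b} (\<lambda>y. y powr (1-\<delta>) * (\<Sum>n. \<alpha> n / (real n + 1 - \<delta>) * y^n))"
proof (rule cont_Icc_from_deriv[OF b(1)])
  define c where "c = (\<lambda>n. \<alpha> n / (real n + 1 - \<delta>))"
  have sc: "summable (\<lambda>n. c n * (1/2)^n)"
    unfolding c_def using pw_summable[OF d] sA sums_summable by (metis abs_divide abs_one abs_numeral divide_less_eq_1_pos zero_less_numeral one_less_numeral_iff semiring_norm(76))
  have "isCont (\<lambda>y. \<Sum>n. c n * y^n) 0" by (rule isCont_powser[OF sc]) simp
  hence h0: "((\<lambda>y. \<Sum>n. c n * y^n) \<longlongrightarrow> (\<Sum>n. c n * 0^n)) (at_right 0)"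
    by (rule isCont_tendsto_within)
  have p0: "((\<lambda>y. y powr (1-\<delta>)) \<longlongrightarrow> 0 powr (1-\<delta>)) (at_right 0)"
    using d by (intro tendsto_powr') (auto intro: tendsto_ident_at eventually_mono[OF eventually_at_right_less])
  have "((\<lambda>y. y powr (1-\<delta>) * (\<Sum>n. c n * y^n)) \<longlongrightarrow> 0 powr (1-\<delta>) * (\<Sum>n. c n * 0^n)) (at_right 0)"
    by (intro tendsto_mult p0 h0)
  thus "((\<lambda>y. y powr (1-\<delta>) * (\<Sum>n. \<alpha> n / (real n + 1 - \<delta>) * y^n)) \<longlongrightarrow>
      0 powr (1-\<delta>) * (\<Sum>n. \<alpha> n / (real n + 1 - \<delta>) * 0^n)) (at_right 0)" unfolding c_def .
next
  fix x :: real assume "0 < x" "x \<le> b"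
  thus "isCont (\<lambda>y. y powr (1-\<delta>) * (\<Sum>n. \<alpha> n / (real n + 1 - \<delta>) * y^n)) x"
    using pw_deriv[OF d sA, of x] b DERIV_isCont by auto
qed

lemma pw_nonneg:
  fixes \<delta> :: real and \<alpha> :: "nat \<Rightarrow> real" and A :: "real \<Rightarrow> real"
  assumes d: "0<\<delta>" "\<delta><1"
    and sA: "\<And>y. \<bar>y\<bar> < 1 \<Longrightarrow> (\<lambda>n. \<alpha> n * y^n) sums A y"
    and Apos: "\<And>y. 0 < y \<Longrightarrow> y < 1 \<Longrightarrow> A y \<ge> 0"
    and y: "0 < y" "y < 1"
  shows "(\<Sum>n. \<alpha> n / (real n + 1 - \<delta>) * y^n) \<ge> 0"
proof -
  define K where "K = (\<lambda>y. y powr (1-\<delta>) * (\<Sum>n. \<alpha> n / (real n + 1 - \<delta>) * y^n))"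
  have "K 0 \<le> K y"
  proof (rule DERIV_nonneg_imp_increasing_open[of 0 y K])
    show "continuous_on {0..y} K" unfolding K_def by (rule pw_cont[OF d sA y])
    fix x assume "0 < x" "x < y"
    thus "\<exists>z. DERIV K x :> z \<and> z \<ge> 0" unfolding K_def
      using pw_deriv[OF d sA, of x] Apos[of x] y by (intro exI[of _ "x powr (-\<delta>) * A x"]) auto
  qed (use y in \<open>auto\<close>)?
  hence "0 \<le> y powr (1-\<delta>) * (\<Sum>n. \<alpha> n / (real n + 1 - \<delta>) * y^n)" by (simp add: K_def)
  thus ?thesis using y by (simp add: zero_le_mult_iff)
qed

lemma poch_ratio:
  assumes d: "0<\<delta>" "\<delta><1"
  shows "pochhammer (-\<delta>) (Suc n) / pochhammer (1-\<delta>) (Suc n) = -\<delta>/(real n + 1 - \<delta>)"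
proof -
  have "pochhammer (1-\<delta>) n > 0" using d by (intro pochhammer_pos) simp
  hence nz: "pochhammer (1-\<delta>) n \<noteq> 0" by simp
  have "pochhammer (-\<delta>) (Suc n) = -\<delta> * pochhammer (-\<delta>+1) n" by (rule pochhammer_rec)
  hence A: "pochhammer (-\<delta>) (Suc n) = -\<delta> * pochhammer (1-\<delta>) n" by simp
  have B: "pochhammer (1-\<delta>) (Suc n) = pochhammer (1-\<delta>) n * (1-\<delta> + real n)"
    by (rule pochhammer_Suc)
  have "-\<delta> * pochhammer (1-\<delta>) n / (pochhammer (1-\<delta>) n * (1-\<delta> + real n)) = -\<delta> / (1-\<delta> + real n)"
    using nz by simp
  thus ?thesis by (simp only: A B) (simp add: algebra_simps)
qed

lemma binom_sums:
  fixes y b :: real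
  assumes "\<bar>y\<bar> < 1"
  shows "(\<lambda>n. pochhammer b n / fact n * y^n) sums (1-y) powr (-b)"
proof -
  have "(\<lambda>n. ((-b) gchoose n) * (-y)^n) sums (1 + -y) powr (-b)"
    by (rule gen_binomial_real) (use assms in auto)
  moreover have "((-b) gchoose n) * (-y)^n = pochhammer b n / fact n * y^n" for n
  proof -
    have "((-b) gchoose n) * (-y)^n = ((-1)^n * (-1)^n) * (pochhammer b n / fact n * y^n)"
      by (simp add: gbinomial_pochhammer power_minus[of y])
    also have "(-1::real)^n * (-1)^n = 1" by (simp add: power_mult_distrib[symmetric])
    finally show ?thesis by simp
  qed
  ultimately show ?thesis by simp
qed

definition alp :: "real \<Rightarrow> nat \<Rightarrow> real" where
  "alp b n = - pochhammer b (Suc n) / fact (Suc n)"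

definition Af :: "real \<Rightarrow> real \<Rightarrow> real" where
  "Af b y = (if y = 0 then -b else (1 - (1-y) powr (-b)) / y)"

lemma alp_sums:
  assumes "\<bar>y\<bar> < 1"
  shows "(\<lambda>n. alp b n * y^n) sums Af b y"
proof (cases "y = 0")
  case True
  thus ?thesis using powser_sums_zero[of "alp b"] by (simp add: Af_def alp_def)
next
  case False
  have "(\<lambda>n. (\<lambda>n. pochhammer b n / fact n * y^n) (Suc n)) sums ((1-y) powr (-b) - 1)"
    using binom_sums[OF assms, of b] by (subst sums_Suc_iff) simp
  hence "(\<lambda>n. - (pochhammer b (Suc n) / fact (Suc n) * y^(Suc n)) / y) sums (- ((1-y) powr (-b) - 1) / y)"
    by (intro sums_divide sums_minus)
  moreover have "(\<lambda>n. - (pochhammer b (Suc n) / fact (Suc n) * y^(Suc n)) / y) = (\<lambda>n. alp b n * y^n)"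
    using False by (intro ext) (simp add: alp_def)
  moreover have "- ((1-y) powr (-b) - 1) / y = Af b y" using False by (simp add: Af_def)
  ultimately show ?thesis by simp
qed

lemma hyp_series_eq:
  assumes d: "0<\<delta>" "\<delta><1" and y: "\<bar>y\<bar> < 1"
  shows "hyp2F1_series (-\<delta>) b (1-\<delta>) y = 1 + \<delta> * y * (\<Sum>n. alp b n / (real n + 1 - \<delta>) * y^n)"
proof -
  define t where "t = (\<lambda>n. pochhammer (-\<delta>) n * pochhammer b n / (pochhammer (1-\<delta>) n * fact n) * y^n)"
  have sm: "summable (\<lambda>n. alp b n / (real n + 1 - \<delta>) * y^n)"
    by (rule pw_summable[OF d _ y]) (use alp_sums sums_summable in blast)
  have "t (Suc n) = \<delta> * y * (alp b n / (real n + 1 - \<delta>) * y^n)" for n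
  proof -
    have "t (Suc n) = (pochhammer (-\<delta>) (Suc n) / pochhammer (1-\<delta>) (Suc n)) * (pochhammer b (Suc n) / fact (Suc n)) * y^(Suc n)"
      unfolding t_def by (simp only: times_divide_eq_left times_divide_eq_right divide_divide_eq_left mult_ac)
    also have "\<dots> = (-\<delta>/(real n + 1 - \<delta>)) * (pochhammer b (Suc n) / fact (Suc n)) * y^(Suc n)"
      by (simp only: poch_ratio[OF d])
    also have "\<dots> = \<delta> * y * (alp b n / (real n + 1 - \<delta>) * y^n)"
      by (simp add: alp_def) (simp add: mult_ac)
    finally show ?thesis .
  qed
  hence "(\<lambda>n. t (Suc n)) sums (\<delta> * y * (\<Sum>n. alp b n / (real n + 1 - \<delta>) * y^n))"
    using sums_mult[OF summable_sums[OF sm], of "\<delta>*y"] by simp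
  hence "t sums (\<delta> * y * (\<Sum>n. alp b n / (real n + 1 - \<delta>) * y^n) + t 0)" by (simp add: sums_Suc_iff)
  moreover have "t 0 = 1" by (simp add: t_def)
  ultimately have T: "t sums (1 + \<delta> * y * (\<Sum>n. alp b n / (real n + 1 - \<delta>) * y^n))" by (simp add: add.commute)
  have "hyp2F1_series (-\<delta>) b (1-\<delta>) y = suminf t" unfolding hyp2F1_series_def t_def by (rule refl)
  also have "\<dots> = 1 + \<delta> * y * (\<Sum>n. alp b n / (real n + 1 - \<delta>) * y^n)" by (rule sums_unique[OF T, symmetric])
  finally show ?thesis .
qed

lemma hypC1_pos:
  assumes d: "0<\<delta>" "\<delta><1" and M: "M \<ge> 1" and z: "z > 0"
  shows "hyp2F1 (-\<delta>) M (1-\<delta>) (-z) \<ge> 1"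
proof (cases "z < 1")
  case True
  define \<beta> where "\<beta> = (\<lambda>n. - alp M n * (-1)^n)"
  define A where "A = (\<lambda>y. - Af M (-y))"
  have sA: "(\<lambda>n. \<beta> n * y^n) sums A y" if "\<bar>y\<bar> < 1" for y
  proof -
    have "(\<lambda>n. - (alp M n * (-y)^n)) sums A y"
      unfolding A_def by (intro sums_minus alp_sums) (use that in auto)
    moreover have "- (alp M n * (-y)^n) = \<beta> n * y^n" for n
      unfolding \<beta>_def by (simp add: power_minus[of y])
    ultimately show ?thesis by simp
  qed
  have Apos: "A y \<ge> 0" if "0 < y" "y < 1" for y
  proof -
    have "(1+y) powr (-M) \<le> 1 powr (-M)" using that M by (intro powr_mono2') auto
    hence "(1+y) powr (-M) \<le> 1" by simp
    thus ?thesis using that by (simp add: A_def Af_def)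
  qed
  have nn: "(\<Sum>n. \<beta> n / (real n + 1 - \<delta>) * z^n) \<ge> 0"
    by (rule pw_nonneg[OF d sA Apos]) (use z True in auto)
  have sm: "summable (\<lambda>n. \<beta> n / (real n + 1 - \<delta>) * z^n)"
    by (rule pw_summable[OF d]) (use sA sums_summable z True in auto)
  have "(\<Sum>n. alp M n / (real n + 1 - \<delta>) * (-z)^n) = (\<Sum>n. - (\<beta> n / (real n + 1 - \<delta>) * z^n))"
    unfolding \<beta>_def by (intro suminf_cong) (simp add: power_minus[of z])
  also have "\<dots> = - (\<Sum>n. \<beta> n / (real n + 1 - \<delta>) * z^n)" by (rule suminf_minus[OF sm])
  finally have eq: "(\<Sum>n. alp M n / (real n + 1 - \<delta>) * (-z)^n) = - (\<Sum>n. \<beta> n / (real n + 1 - \<delta>) * z^n)" .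
  have "hyp2F1 (-\<delta>) M (1-\<delta>) (-z) = hyp2F1_series (-\<delta>) M (1-\<delta>) (-z)"
    using True z by (simp add: hyp2F1_def)
  also have "\<dots> = 1 + \<delta> * (-z) * (\<Sum>n. alp M n / (real n + 1 - \<delta>) * (-z)^n)"
    by (rule hyp_series_eq[OF d]) (use True z in auto)
  also have "\<dots> = 1 + \<delta> * z * (\<Sum>n. \<beta> n / (real n + 1 - \<delta>) * z^n)" by (simp only: eq)
  finally show ?thesis using nn d z by simp
next
  case False
  define w where "w = z / (z+1)"
  have w: "0 < w" "w < 1" using z unfolding w_def by auto
  have "-z - 1 = -(z+1)" by simp
  hence ww: "(-z) / (-z - 1) = w" unfolding w_def by (simp only: minus_divide_divide)
  have Apos: "Af (1-\<delta>-M) y \<ge> 0" if "0 < y" "y < 1" for y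
  proof -
    have "(1-y) powr (-(1-\<delta>-M)) \<le> 1" using that M d by (intro powr_le1) auto
    thus ?thesis using that by (simp add: Af_def)
  qed
  have nn: "(\<Sum>n. alp (1-\<delta>-M) n / (real n + 1 - \<delta>) * w^n) \<ge> 0"
    by (rule pw_nonneg[OF d alp_sums Apos w]) 
  have "hyp2F1 (-\<delta>) M (1-\<delta>) (-z) = (1+z) powr \<delta> * hyp2F1_series (-\<delta>) (1-\<delta>-M) (1-\<delta>) w"
  proof -
    have ww': "- (z / (- z - 1)) = w" using ww by simp
    show ?thesis using False z by (simp add: hyp2F1_def ww')
  qed
  also have "hyp2F1_series (-\<delta>) (1-\<delta>-M) (1-\<delta>) w = 1 + \<delta> * w * (\<Sum>n. alp (1-\<delta>-M) n / (real n + 1 - \<delta>) * w^n)"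
    by (rule hyp_series_eq[OF d]) (use w in auto)
  finally have e: "hyp2F1 (-\<delta>) M (1-\<delta>) (-z) = (1+z) powr \<delta> * (1 + \<delta> * w * (\<Sum>n. alp (1-\<delta>-M) n / (real n + 1 - \<delta>) * w^n))" .
  have "1 \<le> 1 + \<delta> * w * (\<Sum>n. alp (1-\<delta>-M) n / (real n + 1 - \<delta>) * w^n)" using nn d w by simp
  moreover have "1 \<le> (1+z) powr \<delta>" using z d by (intro ge_one_powr_ge_zero) auto
  ultimately have "1 * 1 \<le> (1+z) powr \<delta> * (1 + \<delta> * w * (\<Sum>n. alp (1-\<delta>-M) n / (real n + 1 - \<delta>) * w^n))"
    by (intro mult_mono) auto
  thus ?thesis unfolding e by simp
qed

definition KS :: "real \<Rightarrow> real \<Rightarrow> real" where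
  "KS \<delta> w = w powr (1-\<delta>) * (\<Sum>n. alp (-\<delta>) n / (real n + 1 - \<delta>) * w^n)"
definition Qf :: "real \<Rightarrow> real \<Rightarrow> real" where
  "Qf \<delta> w = KS \<delta> w + (1 - (1-w) powr \<delta>) / (\<delta> * w powr \<delta>)"
definition gB :: "real \<Rightarrow> real \<Rightarrow> real" where
  "gB \<delta> t = t powr (-\<delta>) * (1-t) powr (\<delta>-1)"

lemma KS_deriv:
  assumes d: "0<\<delta>" "\<delta><1" and w: "0<w" "w<1"
  shows "(KS \<delta> has_real_derivative w powr (-\<delta>) * ((1 - (1-w) powr \<delta>) / w)) (at w)"
proof -
  have "(KS \<delta> has_real_derivative w powr (-\<delta>) * Af (-\<delta>) w) (at w)"
    unfolding KS_def[abs_def] by (rule pw_deriv[OF d alp_sums w])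
  thus ?thesis using w by (simp add: Af_def)
qed

lemma N_deriv:
  assumes d: "0<\<delta>" "\<delta><1" and w: "0<w" "w<1"
  shows "((\<lambda>z. (1 - (1 - z) powr \<delta>) / (\<delta> * z powr \<delta>)) has_real_derivative
     (\<delta> * ((1-w) powr \<delta> / (1-w)) * (\<delta> * w powr \<delta>) - (1 - (1-w) powr \<delta>) * (\<delta> * (\<delta> * (w powr \<delta> / w))))
       / (\<delta> * w powr \<delta>)^2) (at w)"
  using w d
  by (auto intro!: derivative_eq_intros simp: powr_diff power2_eq_square mult_ac)

lemma Q_deriv:
  assumes d: "0<\<delta>" "\<delta><1" and w: "0<w" "w<1"
  shows "(Qf \<delta> has_real_derivative gB \<delta> w) (at w)"
proof -
  define P where "P = w powr \<delta>"
  define u where "u = (1-w) powr \<delta>"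
  have P: "P > 0" using w unfolding P_def by simp
  have "(Qf \<delta> has_real_derivative
     w powr (-\<delta>) * ((1 - (1-w) powr \<delta>) / w) +
     (\<delta> * ((1-w) powr \<delta> / (1-w)) * (\<delta> * w powr \<delta>) - (1 - (1-w) powr \<delta>) * (\<delta> * (\<delta> * (w powr \<delta> / w))))
       / (\<delta> * w powr \<delta>)^2) (at w)"
    unfolding Qf_def[abs_def] by (intro DERIV_add KS_deriv[OF d w] N_deriv[OF d w])
  moreover have "w powr (-\<delta>) * ((1 - (1-w) powr \<delta>) / w) +
     (\<delta> * ((1-w) powr \<delta> / (1-w)) * (\<delta> * w powr \<delta>) - (1 - (1-w) powr \<delta>) * (\<delta> * (\<delta> * (w powr \<delta> / w))))
       / (\<delta> * w powr \<delta>)^2 = gB \<delta> w"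
  proof -
    have e1: "w powr (-\<delta>) = 1 / P" unfolding P_def by (simp add: powr_minus_divide)
    have e2: "gB \<delta> w = (1/P) * (u / (1-w))" unfolding gB_def P_def u_def using w
      by (simp add: powr_minus_divide powr_diff)
    show ?thesis unfolding e1 e2 unfolding P_def[symmetric] u_def[symmetric]
      using P w d by (simp add: field_simps power2_eq_square)
  qed
  ultimately show ?thesis by simp
qed

lemma KS_cont: assumes d: "0<\<delta>" "\<delta><1" and b: "0<b" "b<1"
  shows "continuous_on {0..b} (KS \<delta>)"
  unfolding KS_def[abs_def] by (rule pw_cont[OF d alp_sums b])

lemma KS0: "KS \<delta> 0 = 0" by (simp add: KS_def)
lemma Q0: "Qf \<delta> 0 = 0" by (simp add: Qf_def KS0)

lemma N_bounds:
  fixes \<delta> w :: real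
  assumes d: "0<\<delta>" "\<delta><1" and w: "0<w" "w<1"
  shows "0 \<le> (1 - (1-w) powr \<delta>) / (\<delta> * w powr \<delta>)"
    and "(1 - (1-w) powr \<delta>) / (\<delta> * w powr \<delta>) \<le> w powr (1-\<delta>) / \<delta>"
proof -
  have "(1-w) powr \<delta> \<le> 1" by (rule powr_le1) (use w d in auto)
  moreover have "(1-w) powr 1 \<le> (1-w) powr \<delta>" using w d by (intro powr_mono') auto
  hence "1 - w \<le> (1-w) powr \<delta>" using w by simp
  moreover have P: "w powr \<delta> > 0" using w by simp
  ultimately show "0 \<le> (1 - (1-w) powr \<delta>) / (\<delta> * w powr \<delta>)" using d by simp
  have "(1 - (1-w) powr \<delta>) / (\<delta> * w powr \<delta>) \<le> w / (\<delta> * w powr \<delta>)"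
    using \<open>1 - w \<le> (1-w) powr \<delta>\<close> P d by (intro divide_right_mono) auto
  also have "w / (\<delta> * w powr \<delta>) = w powr (1-\<delta>) / \<delta>" using w by (simp add: powr_diff)
  finally show "(1 - (1-w) powr \<delta>) / (\<delta> * w powr \<delta>) \<le> w powr (1-\<delta>) / \<delta>" .
qed

lemma N_lim:
  fixes \<delta> :: real
  assumes d: "0<\<delta>" "\<delta><1"
  shows "((\<lambda>w. (1 - (1-w) powr \<delta>) / (\<delta> * w powr \<delta>)) \<longlongrightarrow> 0) (at_right 0)"
proof (rule tendsto_sandwich[where f="\<lambda>_. 0" and h="\<lambda>w. w powr (1-\<delta>) / \<delta>"])
  have ev: "eventually (\<lambda>w. 0 < w \<and> w < 1) (at_right (0::real))"
    unfolding eventually_at_right_field by (intro exI[of _ 1]) auto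
  show "eventually (\<lambda>w. 0 \<le> (1 - (1-w) powr \<delta>) / (\<delta> * w powr \<delta>)) (at_right 0)"
    using ev by (rule eventually_mono) (use N_bounds[OF d] in auto)
  show "eventually (\<lambda>w. (1 - (1-w) powr \<delta>) / (\<delta> * w powr \<delta>) \<le> w powr (1-\<delta>) / \<delta>) (at_right 0)"
    using ev by (rule eventually_mono) (use N_bounds[OF d] in auto)
  show "((\<lambda>_. 0) \<longlongrightarrow> (0::real)) (at_right 0)" by simp
  have "((\<lambda>w. w powr (1-\<delta>) / \<delta>) \<longlongrightarrow> 0 powr (1-\<delta>) / \<delta>) (at_right 0)"
    using d by (intro tendsto_divide tendsto_powr') (auto intro: tendsto_ident_at eventually_mono[OF eventually_at_right_less])
  thus "((\<lambda>w. w powr (1-\<delta>) / \<delta>) \<longlongrightarrow> 0) (at_right 0)" by simp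
qed

lemma Q_cont: assumes d: "0<\<delta>" "\<delta><1" and b: "0<b" "b<1"
  shows "continuous_on {0..b} (Qf \<delta>)"
proof (rule cont_Icc_from_deriv[OF b(1)])
  have "(KS \<delta> \<longlongrightarrow> KS \<delta> 0) (at_right 0)" by (rule continuous_on_Icc_at_rightD[OF KS_cont[OF d b] b(1)])
  hence "((\<lambda>w. KS \<delta> w + (1 - (1-w) powr \<delta>) / (\<delta> * w powr \<delta>)) \<longlongrightarrow> KS \<delta> 0 + 0) (at_right 0)"
    by (intro tendsto_add N_lim[OF d])
  thus "(Qf \<delta> \<longlongrightarrow> Qf \<delta> 0) (at_right 0)" unfolding Qf_def[abs_def] by (simp add: KS0)
  fix x assume "0 < x" "x \<le> b"
  thus "isCont (Qf \<delta>) x" using Q_deriv[OF d, of x] b DERIV_isCont by auto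
qed

lemma BetaQ:
  assumes d: "0<\<delta>" "\<delta><1" and w: "0<w" "w<1"
  shows "\<delta> * w powr \<delta> * Qf \<delta> w \<ge> Gamma (1-\<delta>) * Gamma (1+\<delta>) * w powr \<delta> - (1-w) powr \<delta>"
proof -
  have I1: "(gB \<delta> has_integral (Qf \<delta> w - Qf \<delta> 0)) {0..w}"
  proof (rule fundamental_theorem_of_calculus_interior)
    show "continuous_on {0..w} (Qf \<delta>)" by (rule Q_cont[OF d w])
    fix x assume "x \<in> {0<..<w}"
    thus "(Qf \<delta> has_vector_derivative gB \<delta> x) (at x)"
      using Q_deriv[OF d, of x] w by (simp add: has_real_derivative_iff_has_vector_derivative)
  qed (use w in auto)
  have IB: "(gB \<delta> has_integral Beta (1-\<delta>) \<delta>) {0..1}"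
    using has_integral_Beta_real[of "1-\<delta>" \<delta>] d unfolding gB_def[abs_def] by simp
  have "gB \<delta> integrable_on {w..1}"
    by (rule integrable_subinterval_real[OF has_integral_integrable[OF IB]]) (use w in auto)
  then obtain J where J: "(gB \<delta> has_integral J) {w..1}" by blast
  have "(gB \<delta> has_integral (Qf \<delta> w - Qf \<delta> 0) + J) {0..1}"
    by (rule has_integral_combine[OF _ _ I1 J]) (use w in auto)
  hence JB: "J = Beta (1-\<delta>) \<delta> - Qf \<delta> w" using has_integral_unique[OF IB] by (simp add: Q0)
  define F where "F = (\<lambda>t. - (w powr (-\<delta>) * (1-t) powr \<delta> / \<delta>))"
  have I2: "((\<lambda>t. w powr (-\<delta>) * (1-t) powr (\<delta>-1)) has_integral (F 1 - F w)) {w..1}"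
  proof (rule fundamental_theorem_of_calculus_interior)
    show "continuous_on {w..1} F" unfolding F_def using d by (intro continuous_intros continuous_on_powr') auto
    fix x assume x: "x \<in> {w<..<1}"
    have "(F has_real_derivative - (w powr (-\<delta>) * (\<delta> * (1-x) powr (\<delta>-1) * (-1)) / \<delta>)) (at x)"
      unfolding F_def using x d by (auto intro!: derivative_eq_intros)
    thus "(F has_vector_derivative w powr (-\<delta>) * (1-x) powr (\<delta>-1)) (at x)"
      using d by (simp add: has_real_derivative_iff_has_vector_derivative)
  qed (use w in auto)
  have "J \<le> F 1 - F w"
  proof (rule has_integral_le[OF J I2])
    fix t assume t: "t \<in> {w..1}"
    have "t powr (-\<delta>) \<le> w powr (-\<delta>)" using t w d by (intro powr_mono2') auto
    moreover have "(1-t) powr (\<delta>-1) \<ge> 0" by simp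
    ultimately show "gB \<delta> t \<le> w powr (-\<delta>) * (1-t) powr (\<delta>-1)" unfolding gB_def
      by (intro mult_right_mono) auto
  qed
  hence "Beta (1-\<delta>) \<delta> - Qf \<delta> w \<le> w powr (-\<delta>) * (1-w) powr \<delta> / \<delta>"
    unfolding JB F_def using d by simp
  hence "\<delta> * w powr \<delta> * (Beta (1-\<delta>) \<delta> - Qf \<delta> w) \<le> \<delta> * w powr \<delta> * (w powr (-\<delta>) * (1-w) powr \<delta> / \<delta>)"
    using d w by (intro mult_left_mono) auto
  also have "\<dots> = (1-w) powr \<delta>" using d w by (simp add: powr_minus_divide)
  finally have *: "\<delta> * w powr \<delta> * (Beta (1-\<delta>) \<delta> - Qf \<delta> w) \<le> (1-w) powr \<delta>" .
  have "Gamma (1+\<delta>) = \<delta> * Gamma \<delta>"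
  proof -
    have "\<delta> \<notin> \<int>\<^sub>\<le>\<^sub>0" using d nonpos_Ints_nonpos by fastforce
    from Gamma_plus1[OF this] show ?thesis by (simp add: add.commute)
  qed
  hence GB: "Gamma (1-\<delta>) * Gamma (1+\<delta>) = \<delta> * Beta (1-\<delta>) \<delta>" by (simp add: Beta_def)
  show ?thesis using * unfolding GB by (simp add: algebra_simps)
qed

lemma S_eq:
  fixes \<delta> w :: real
  assumes d: "0<\<delta>" "\<delta><1" and w: "0<w" "w<1"
  shows "hyp2F1_series (-\<delta>) (-\<delta>) (1-\<delta>) w = (1-w) powr \<delta> + \<delta> * w powr \<delta> * Qf \<delta> w"
proof -
  define h where "h = (\<Sum>n. alp (-\<delta>) n / (real n + 1 - \<delta>) * w^n)"
  have e: "hyp2F1_series (-\<delta>) (-\<delta>) (1-\<delta>) w = 1 + \<delta> * w * h"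
    unfolding h_def by (rule hyp_series_eq[OF d]) (use w in auto)
  have ww: "w powr \<delta> * w powr (1-\<delta>) = w" using w by (simp add: powr_add[symmetric])
  have P: "w powr \<delta> > 0" using w by simp
  have "\<delta> * w powr \<delta> * Qf \<delta> w = \<delta> * (w powr \<delta> * w powr (1-\<delta>)) * h + (1 - (1-w) powr \<delta>)"
    unfolding Qf_def KS_def h_def[symmetric] using P d by (simp add: field_simps)
  also have "\<dots> = \<delta> * w * h + (1 - (1-w) powr \<delta>)" by (simp only: ww)
  finally show ?thesis unfolding e by simp
qed

lemma KF_eq:
  fixes \<delta> x :: real
  assumes d: "0<\<delta>" "\<delta><1" and x: "0<x" "x<1"
  shows "x powr (1-\<delta>) * (\<Sum>n. (-1)^n / (real n + 1 - \<delta>) * x^n) = Qf \<delta> (x/(1+x))"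
proof -
  define KF where "KF = (\<lambda>y::real. y powr (1-\<delta>) * (\<Sum>n. (-1)^n / (real n + 1 - \<delta>) * y^n))"
  define D where "D = (\<lambda>t. KF t - Qf \<delta> (t/(1+t)))"
  have sA: "(\<lambda>n. (-1)^n * y^n) sums (1/(1+y))" if "\<bar>y\<bar> < 1" for y :: real
  proof -
    have "(\<lambda>n. (-y)^n) sums (1/(1-(-y)))" by (rule geometric_sums) (use that in auto)
    thus ?thesis by (simp add: power_minus[of y])
  qed
  have xb: "0 < x/(1+x)" "x/(1+x) < 1" using x by auto
  have cD: "continuous_on {0..x} D"
  proof -
    have c1: "continuous_on {0..x} KF" unfolding KF_def by (rule pw_cont[OF d sA x])
    have "continuous_on {0..x} (\<lambda>t. t/(1+t))" by (intro continuous_intros) auto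
    moreover have "(\<lambda>t. t/(1+t)) ` {0..x} \<subseteq> {0..x/(1+x)}"
      using x by (auto simp: field_simps)
    ultimately have c2: "continuous_on {0..x} (\<lambda>t. Qf \<delta> (t/(1+t)))"
      by (intro continuous_on_compose2[OF Q_cont[OF d xb]])
    show ?thesis unfolding D_def by (intro continuous_intros c1 c2)
  qed
  have dD: "(D has_real_derivative 0) (at t)" if t: "0 < t" "t < x" for t
  proof -
    have t1: "t < 1" using t x by simp
    have tb: "0 < t/(1+t)" "t/(1+t) < 1" using t by auto
    have k: "(KF has_real_derivative t powr (-\<delta>) * (1/(1+t))) (at t)"
      unfolding KF_def by (rule pw_deriv[OF d sA t(1) t1])
    have wd: "((\<lambda>t. t/(1+t)) has_real_derivative 1/(1+t)^2) (at t)"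
      using t by (auto intro!: derivative_eq_intros simp: field_simps power2_eq_square)
    have q: "((\<lambda>t. Qf \<delta> (t/(1+t))) has_real_derivative gB \<delta> (t/(1+t)) * (1/(1+t)^2)) (at t)"
      by (rule DERIV_chain2[OF Q_deriv[OF d tb] wd])
    have eq: "gB \<delta> (t/(1+t)) * (1/(1+t)^2) = t powr (-\<delta>) * (1/(1+t))"
    proof -
      have "1 - t/(1+t) = 1/(1+t)" using t by (simp add: field_simps)
      hence "gB \<delta> (t/(1+t)) = t powr (-\<delta>) / (1+t) powr (-\<delta>) * (1 / (1+t) powr (\<delta>-1))"
        unfolding gB_def using t by (simp add: powr_divide)
      also have "\<dots> = t powr (-\<delta>) * (1+t) powr \<delta> * ((1+t) / (1+t) powr \<delta>)"
        using t by (simp add: powr_minus_divide powr_diff)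
      also have "\<dots> = t powr (-\<delta>) * (1+t)" using t by simp
      finally have g: "gB \<delta> (t/(1+t)) = t powr (-\<delta>) * (1+t)" .
      have nz: "1 + t \<noteq> 0" using t by simp
      have "(1+t)/(1+t)^2 = 1/(1+t)" using nz by (simp add: power2_eq_square)
      thus ?thesis unfolding g by (metis times_divide_eq_right mult.assoc mult_1_right)
    qed
    show ?thesis unfolding D_def using DERIV_diff[OF k q] eq by simp
  qed
  have "((\<lambda>_. 0) has_integral (D x - D 0)) {0..x}"
    by (rule fundamental_theorem_of_calculus_interior[OF _ cD])
       (use x dD in \<open>auto simp: has_real_derivative_iff_has_vector_derivative[symmetric]\<close>)
  hence "D x - D 0 = 0" using has_integral_unique has_integral_0 by blast
  moreover have "D 0 = 0" unfolding D_def KF_def by (simp add: Q0)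
  ultimately show ?thesis unfolding D_def KF_def by simp
qed

lemma F3_ge:
  fixes \<delta> x :: real
  assumes d: "0<\<delta>" "\<delta><1" and x: "0 < x"
  shows "hyp2F1 (-\<delta>) 1 (1-\<delta>) (-x) \<ge> Gamma (1-\<delta>) * Gamma (1+\<delta>) * x powr \<delta>"
proof -
  define B where "B = Gamma (1-\<delta>) * Gamma (1+\<delta>)"
  define w where "w = x / (x+1)"
  have w: "0 < w" "w < 1" using x unfolding w_def by auto
  have Q: "\<delta> * w powr \<delta> * Qf \<delta> w \<ge> B * w powr \<delta> - (1-w) powr \<delta>"
    unfolding B_def by (rule BetaQ[OF d w])
  have xw: "(1+x) * w = x" unfolding w_def using x by (simp add: field_simps)
  have xw1: "(1+x) * (1-w) = 1" unfolding w_def using x by (simp add: field_simps)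
  have px: "(1+x) powr \<delta> * w powr \<delta> = x powr \<delta>"
    using x w by (simp add: powr_mult[symmetric] xw)
  have px1: "(1+x) powr \<delta> * (1-w) powr \<delta> = 1"
    using x w by (simp add: powr_mult[symmetric] xw1)
  have P1: "(1+x) powr \<delta> > 0" using x by simp
  have key: "(1+x) powr \<delta> * (\<delta> * w powr \<delta> * Qf \<delta> w) \<ge> B * x powr \<delta> - 1"
  proof -
    have "(1+x) powr \<delta> * (B * w powr \<delta> - (1-w) powr \<delta>) \<le> (1+x) powr \<delta> * (\<delta> * w powr \<delta> * Qf \<delta> w)"
      using Q P1 by (intro mult_left_mono) auto
    moreover have "(1+x) powr \<delta> * (B * w powr \<delta> - (1-w) powr \<delta>) = B * x powr \<delta> - 1"
      using px px1 by (simp add: algebra_simps)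
    ultimately show ?thesis by simp
  qed
  show ?thesis
  proof (cases "x < 1")
    case True
    define hF where "hF = (\<Sum>n. (-1)^n / (real n + 1 - \<delta>) * x^n :: real)"
    have sA: "(\<lambda>n. (-1)^n * y^n) sums (1/(1+y))" if "\<bar>y\<bar> < 1" for y :: real
    proof -
      have "(\<lambda>n. (-y)^n) sums (1/(1-(-y)))" by (rule geometric_sums) (use that in auto)
      thus ?thesis by (simp add: power_minus[of y])
    qed
    have sm: "summable (\<lambda>n. (-1)^n / (real n + 1 - \<delta>) * x^n :: real)"
      by (rule pw_summable[OF d]) (use sA sums_summable x True in auto)
    have alp1: "alp 1 n = -1" for n
    proof -
      have "pochhammer (1::real) (Suc n) > 0" by (intro pochhammer_pos) simp
      thus ?thesis by (simp add: alp_def pochhammer_fact)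
    qed
    have "(\<Sum>n. alp 1 n / (real n + 1 - \<delta>) * (-x)^n) = (\<Sum>n. - ((-1)^n / (real n + 1 - \<delta>) * x^n))"
      by (intro suminf_cong) (simp add: alp1 power_minus[of x])
    also have "\<dots> = - hF" unfolding hF_def by (rule suminf_minus[OF sm])
    finally have eqs: "(\<Sum>n. alp 1 n / (real n + 1 - \<delta>) * (-x)^n) = - hF" .
    have "hyp2F1 (-\<delta>) 1 (1-\<delta>) (-x) = hyp2F1_series (-\<delta>) 1 (1-\<delta>) (-x)"
      using True x by (simp add: hyp2F1_def)
    also have "\<dots> = 1 + \<delta> * (-x) * (\<Sum>n. alp 1 n / (real n + 1 - \<delta>) * (-x)^n)"
      by (rule hyp_series_eq[OF d]) (use True x in auto)
    also have "\<dots> = 1 + \<delta> * (x * hF)" by (simp only: eqs)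
    also have "x * hF = x powr \<delta> * (x powr (1-\<delta>) * hF)"
      using x by (simp add: powr_add[symmetric] mult.assoc[symmetric])
    also have "x powr (1-\<delta>) * hF = Qf \<delta> (x/(1+x))" unfolding hF_def by (rule KF_eq[OF d x True])
    also have "x/(1+x) = w" unfolding w_def by (simp add: add.commute)
    finally have e: "hyp2F1 (-\<delta>) 1 (1-\<delta>) (-x) = 1 + \<delta> * (x powr \<delta> * Qf \<delta> w)" .
    have eq2: "\<delta> * (x powr \<delta> * Qf \<delta> w) = (1+x) powr \<delta> * (\<delta> * w powr \<delta> * Qf \<delta> w)"
      unfolding px[symmetric] by (simp add: algebra_simps)
    show ?thesis unfolding e B_def[symmetric] eq2 using key by linarith
  next
    case False
    have "-x - 1 = -(x+1)" by simp
    hence ww: "(-x) / (-x - 1) = w" unfolding w_def by (simp only: minus_divide_divide)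
    have ww': "- (x / (- x - 1)) = w" using ww by simp
    have "hyp2F1 (-\<delta>) 1 (1-\<delta>) (-x) = (1+x) powr \<delta> * hyp2F1_series (-\<delta>) (-\<delta>) (1-\<delta>) w"
      using False x by (simp add: hyp2F1_def ww')
    also have "hyp2F1_series (-\<delta>) (-\<delta>) (1-\<delta>) w = (1-w) powr \<delta> + \<delta> * w powr \<delta> * Qf \<delta> w"
      by (rule S_eq[OF d w])
    finally have e: "hyp2F1 (-\<delta>) 1 (1-\<delta>) (-x) = (1+x) powr \<delta> * ((1-w) powr \<delta> + \<delta> * w powr \<delta> * Qf \<delta> w)" .
    have eq2: "(1+x) powr \<delta> * ((1-w) powr \<delta> + \<delta> * w powr \<delta> * Qf \<delta> w) = 1 + (1+x) powr \<delta> * (\<delta> * w powr \<delta> * Qf \<delta> w)"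
      using px1 by (simp add: algebra_simps)
    show ?thesis unfolding e B_def[symmetric] eq2 using key by linarith
  qed
qed

lemma clip01_bounds: "0 \<le> clip01 x" "clip01 x \<le> 1" by (auto simp: clip01_def)

lemma wf_term:
  fixes c1 c2 \<nu> p q :: real
  assumes c: "c1 > 0" "c2 > 0" and \<nu>: "\<nu> > 0" and p: "p > 0" and q: "0 \<le> q" "q \<le> 1"
  defines "qs \<equiv> clip01 (sqrt c1 / (sqrt \<nu> * c2) * sqrt p - c1/c2)"
  shows "p * q / (c1 + c2 * q) - p * qs / (c1 + c2 * qs) \<le> \<nu> * (q - qs)"
proof -
  define X where "X = sqrt c1 * sqrt p / sqrt \<nu>"
  define u where "u = sqrt c1 / (sqrt \<nu> * c2) * sqrt p - c1/c2"
  have X: "X > 0" unfolding X_def using c p \<nu> by simp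
  have X2: "X^2 = c1 * p / \<nu>" unfolding X_def using c p \<nu> by (simp add: power_divide power_mult_distrib)
  have \<nu>X: "\<nu> = p * c1 / X^2" using X2 X \<nu> by (simp add: field_simps)
  have uX: "c1 + c2 * u = X" unfolding u_def X_def using c by (simp add: field_simps)
  have qs01: "0 \<le> qs" "qs \<le> 1" unfolding qs_def by (rule clip01_bounds)+
  define D where "D = c1 + c2 * q"
  define Ds where "Ds = c1 + c2 * qs"
  have D: "D > 0" unfolding D_def using c q by (simp add: add_pos_nonneg)
  have Ds: "Ds > 0" unfolding Ds_def using c qs01 by (simp add: add_pos_nonneg)
  have "p * q / D - p * qs / Ds - p * c1 * (q - qs) / Ds^2 = (p*q*Ds^2 - p*qs*D*Ds - p*c1*(q-qs)*D)/(D*Ds^2)"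
    using D Ds by (simp add: field_simps power2_eq_square)
  also have "p*q*Ds^2 - p*qs*D*Ds - p*c1*(q-qs)*D = - (p * c1 * c2 * (q - qs)^2)"
    unfolding D_def Ds_def by (simp add: algebra_simps power2_eq_square)
  finally have step1: "p * q / D - p * qs / Ds - p * c1 * (q - qs) / Ds^2 = - (p * c1 * c2 * (q - qs)^2) / (D * Ds^2)" .
  have "- (p * c1 * c2 * (q - qs)^2) / (D * Ds^2) \<le> 0"
    using c p D Ds by (intro divide_nonpos_pos) auto
  hence s1: "p * q / D - p * qs / Ds \<le> (p * c1 / Ds^2) * (q - qs)" using step1 by simp
  have s2: "(p * c1 / Ds^2) * (q - qs) \<le> \<nu> * (q - qs)"
  proof (cases "u \<le> 0")
    case True
    hence "qs = 0" unfolding qs_def u_def[symmetric] clip01_def by simp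
    hence "Ds = c1" unfolding Ds_def by simp
    have "X \<le> c1" using uX True c by (smt (verit) mult_nonneg_nonpos)
    hence "X^2 \<le> Ds^2" using X \<open>Ds = c1\<close> by (intro power_mono) auto
    hence "p * c1 / Ds^2 \<le> p * c1 / X^2" using X c p Ds by (intro divide_left_mono) auto
    thus ?thesis unfolding \<nu>X[symmetric] using q \<open>qs = 0\<close> by (intro mult_right_mono) auto
  next
    case False
    show ?thesis
    proof (cases "u \<ge> 1")
      case True
      hence "qs = 1" unfolding qs_def u_def[symmetric] clip01_def by simp
      hence "Ds = c1 + c2" unfolding Ds_def by simp
      have "c2 * 1 \<le> c2 * u" using True c by (intro mult_left_mono) auto
      hence "c1 + c2 \<le> X" using uX by simp
      hence "Ds^2 \<le> X^2" using Ds \<open>Ds = c1 + c2\<close> by (intro power_mono) auto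
      hence "p * c1 / X^2 \<le> p * c1 / Ds^2" using Ds c p X by (intro divide_left_mono) auto
      thus ?thesis unfolding \<nu>X[symmetric] using q \<open>qs = 1\<close> by (intro mult_right_mono_neg) auto
    next
      case False2: False
      hence "qs = u" using False unfolding qs_def u_def[symmetric] clip01_def by simp
      hence "Ds = X" unfolding Ds_def using uX by simp
      thus ?thesis unfolding \<nu>X by simp
    qed
  qed
  show ?thesis using s1 s2 unfolding D_def Ds_def by simp
qed

lemma wf_opt:
  fixes c1 c2 \<nu> :: real and p q :: "nat \<Rightarrow> real" and A :: "nat set"
  assumes fin: "finite A" and c: "c1 > 0" "c2 > 0" and \<nu>: "\<nu> > 0" and p: "\<forall>f\<in>A. p f > 0"
    and qs: "qs = (\<lambda>f. clip01 (sqrt c1 / (sqrt \<nu> * c2) * sqrt (p f) - c1/c2))"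
    and sN: "(\<Sum>f\<in>A. qs f) = N"
    and q: "\<forall>f\<in>A. 0 \<le> q f \<and> q f \<le> 1" and qN: "(\<Sum>f\<in>A. q f) \<le> N"
  shows "(\<Sum>f\<in>A. p f * q f / (c1 + c2 * q f)) \<le> (\<Sum>f\<in>A. p f * qs f / (c1 + c2 * qs f))"
proof -
  have "(\<Sum>f\<in>A. p f * q f / (c1 + c2 * q f) - p f * qs f / (c1 + c2 * qs f)) \<le> (\<Sum>f\<in>A. \<nu> * (q f - qs f))"
    by (intro sum_mono) (use wf_term[OF c \<nu>] p q qs in auto)
  also have "\<dots> = \<nu> * ((\<Sum>f\<in>A. q f) - N)" using sN by (simp add: sum_distrib_left[symmetric] sum_subtractf)
  also have "\<dots> \<le> 0" using \<nu> qN by (simp add: mult_nonneg_nonpos)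
  finally show ?thesis by (simp add: sum_subtractf)
qed

lemma wf_exists:
  fixes r :: "nat \<Rightarrow> real" and b N :: real and A :: "nat set"
  assumes fin: "finite A" and ne: "A \<noteq> {}" and r: "\<forall>f\<in>A. r f > 0" and b: "b > 0"
    and N: "0 \<le> N" "N \<le> real (card A)"
  shows "\<exists>\<nu>>0. (\<Sum>f\<in>A. clip01 (r f / sqrt \<nu> - b)) = N"
proof -
  define m where "m = Min (r ` A)"
  define M where "M = Max (r ` A)"
  have m: "m > 0" "\<forall>f\<in>A. m \<le> r f" unfolding m_def using fin ne r by auto
  have M: "\<forall>f\<in>A. r f \<le> M" unfolding M_def using fin ne by auto
  have mM: "m \<le> M" using m M ne by force
  define \<nu>0 where "\<nu>0 = (m/(1+b))^2"
  define \<nu>1 where "\<nu>1 = (M/b)^2"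
  have s0: "sqrt \<nu>0 = m/(1+b)" unfolding \<nu>0_def using m b by simp
  have s1: "sqrt \<nu>1 = M/b" unfolding \<nu>1_def using mM m b by simp
  have pos0: "\<nu>0 > 0" unfolding \<nu>0_def using m b by simp
  define \<phi> where "\<phi> = (\<lambda>\<nu>. \<Sum>f\<in>A. clip01 (r f / sqrt \<nu> - b))"
  have "\<phi> \<nu>0 = (\<Sum>f\<in>A. 1)"
    unfolding \<phi>_def
  proof (intro sum.cong refl)
    fix f assume f: "f \<in> A"
    have "r f / sqrt \<nu>0 = r f * (1+b) / m" unfolding s0 using m b by simp
    also have "\<dots> \<ge> m * (1+b) / m" using m f b by (intro divide_right_mono mult_right_mono) auto
    finally have "r f / sqrt \<nu>0 - b \<ge> 1" using m by simp
    thus "clip01 (r f / sqrt \<nu>0 - b) = 1" by (simp add: clip01_def)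
  qed
  hence f0: "\<phi> \<nu>0 = real (card A)" by simp
  have "\<phi> \<nu>1 = (\<Sum>f\<in>A. 0)"
    unfolding \<phi>_def
  proof (intro sum.cong refl)
    fix f assume f: "f \<in> A"
    have "r f / sqrt \<nu>1 = r f * b / M" unfolding s1 using m mM b by simp
    also have "\<dots> \<le> M * b / M" using m mM f b M by (intro divide_right_mono mult_right_mono) auto
    finally have "r f / sqrt \<nu>1 - b \<le> 0" using m mM by simp
    thus "clip01 (r f / sqrt \<nu>1 - b) = 0" by (simp add: clip01_def)
  qed
  hence f1: "\<phi> \<nu>1 = 0" by simp
  have "b*m \<le> b*M" using mM b by (intro mult_left_mono) auto
  hence "b*m \<le> M + M*b" using mM m by (simp add: algebra_simps)
  hence "m/(1+b) \<le> M/b" using b by (simp add: field_simps)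
  hence le: "\<nu>0 \<le> \<nu>1" unfolding \<nu>0_def \<nu>1_def using m b
    by (intro power_mono) auto
  have "\<exists>x\<ge>\<nu>0. x \<le> \<nu>1 \<and> \<phi> x = N"
  proof (rule IVT2)
    show "\<phi> \<nu>1 \<le> N" using f1 N by simp
    show "N \<le> \<phi> \<nu>0" using f0 N by simp
    show "\<nu>0 \<le> \<nu>1" by (rule le)
    show "\<forall>x. \<nu>0 \<le> x \<and> x \<le> \<nu>1 \<longrightarrow> isCont \<phi> x"
    proof (intro allI impI)
      fix x assume "\<nu>0 \<le> x \<and> x \<le> \<nu>1"
      hence x: "x > 0" using pos0 by simp
      show "isCont \<phi> x" unfolding \<phi>_def clip01_def using x by (intro continuous_intros) auto
    qed
  qed
  then obtain x where "x \<ge> \<nu>0" "\<phi> x = N" by auto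
  thus ?thesis using pos0 unfolding \<phi>_def by (intro exI[of _ x]) auto
qed

lemma main_abstract:
  fixes c1 c2 :: real and p :: "nat \<Rightarrow> real"
  assumes "1 \<le> Nf" "1 \<le> Nc" "Nc \<le> Nf" and p: "\<forall>f\<in>{1..Nf}. p f > 0" and c: "c1 > 0" "c2 > 0"
  shows "(\<exists>\<nu>>0. (\<Sum>f=1..Nf. clip01 (sqrt c1 / (sqrt \<nu> * c2) * sqrt (p f) - c1 / c2)) = real Nc) \<and>
     (\<forall>\<nu>>0. (\<Sum>f=1..Nf. clip01 (sqrt c1 / (sqrt \<nu> * c2) * sqrt (p f) - c1 / c2)) = real Nc \<longrightarrow>
        (\<lambda>f. clip01 (sqrt c1 / (sqrt \<nu> * c2) * sqrt (p f) - c1 / c2)) \<in> feasible_set Nf Nc \<and>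
        (\<forall>q\<in>feasible_set Nf Nc. (\<Sum>f=1..Nf. p f * q f / (c1 + c2 * q f)) \<le>
           (\<Sum>f=1..Nf. p f * clip01 (sqrt c1 / (sqrt \<nu> * c2) * sqrt (p f) - c1 / c2) /
              (c1 + c2 * clip01 (sqrt c1 / (sqrt \<nu> * c2) * sqrt (p f) - c1 / c2)))))"
proof (intro conjI allI impI)
  define r where "r = (\<lambda>f. sqrt c1 * sqrt (p f) / c2)"
  have req: "sqrt c1 / (sqrt \<nu> * c2) * sqrt (p f) = r f / sqrt \<nu>" for \<nu> f
    unfolding r_def by simp
  have "\<exists>\<nu>>0. (\<Sum>f\<in>{1..Nf}. clip01 (r f / sqrt \<nu> - c1/c2)) = real Nc"
    by (rule wf_exists) (use assms in \<open>auto simp: r_def\<close>)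
  thus "\<exists>\<nu>>0. (\<Sum>f=1..Nf. clip01 (sqrt c1 / (sqrt \<nu> * c2) * sqrt (p f) - c1 / c2)) = real Nc"
    by (simp only: req)
next
  fix \<nu> :: real
  assume \<nu>: "\<nu> > 0" and s: "(\<Sum>f=1..Nf. clip01 (sqrt c1 / (sqrt \<nu> * c2) * sqrt (p f) - c1 / c2)) = real Nc"
  show "(\<lambda>f. clip01 (sqrt c1 / (sqrt \<nu> * c2) * sqrt (p f) - c1 / c2)) \<in> feasible_set Nf Nc"
    unfolding feasible_set_def using s by (auto simp: clip01_bounds)
next
  fix \<nu> :: real
  assume \<nu>: "\<nu> > 0" and s: "(\<Sum>f=1..Nf. clip01 (sqrt c1 / (sqrt \<nu> * c2) * sqrt (p f) - c1 / c2)) = real Nc"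
  show "\<forall>q\<in>feasible_set Nf Nc. (\<Sum>f=1..Nf. p f * q f / (c1 + c2 * q f)) \<le>
           (\<Sum>f=1..Nf. p f * clip01 (sqrt c1 / (sqrt \<nu> * c2) * sqrt (p f) - c1 / c2) /
              (c1 + c2 * clip01 (sqrt c1 / (sqrt \<nu> * c2) * sqrt (p f) - c1 / c2)))"
  proof
  fix q assume q: "q \<in> feasible_set Nf Nc"
  show "(\<Sum>f=1..Nf. p f * q f / (c1 + c2 * q f)) \<le>
           (\<Sum>f=1..Nf. p f * clip01 (sqrt c1 / (sqrt \<nu> * c2) * sqrt (p f) - c1 / c2) /
              (c1 + c2 * clip01 (sqrt c1 / (sqrt \<nu> * c2) * sqrt (p f) - c1 / c2)))"
    by (rule wf_opt[OF _ c \<nu> p refl s]) (use q in \<open>auto simp: feasible_set_def\<close>)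
  qed
qed

theorem proposition2:
  fixes Nf Nc M1 :: nat
    and p :: "nat \<Rightarrow> real"
    and \<alpha> lam1 lam2 lamu P1 P2 B1 B2 W R0 :: real
  assumes "1 \<le> Nf" and "1 \<le> Nc" and "Nc \<le> Nf"
    and "\<forall>f\<in>{1..Nf}. p f > 0" and "(\<Sum>f=1..Nf. p f) = 1"
    and "\<alpha> > 2" and "1 \<le> M1"
    and "lam1 > 0" "lam2 > 0" "lamu > 0" "P1 > 0" "P2 > 0" "B1 > 0" "B2 > 0" "W > 0" "R0 > 0"
  shows
   "let M12 = real M1; lam12 = lam1 / lam2; P12 = P1 / P2; B12 = B1 / B2;
        F = feasible_set Nf Nc;
        Po = (SUP q\<in>F. \<Sum>f=1..Nf. p f * q f / (lam12 * (P12 * B12) powr (2 / \<alpha>) + q f));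
        \<gamma> = 2 powr ((R0 / W) * (1 + 1.28 * lamu * Po / lam2)) - 1;
        pb = 1 - (1 + Po * lamu / (3.5 * lam2)) powr (-3.5);
        C1 = (\<lambda>x. lam12 * (P12 * B12) powr (2 / \<alpha>) *
                 hyp2F1 (-(2 / \<alpha>)) (real M1) (1 - 2 / \<alpha>) (- x / (M12 * B12)));
        C2 = (\<lambda>x. Gamma (1 - 2 / \<alpha>) * Gamma (1 + 2 / \<alpha>) * x powr (2 / \<alpha>));
        C3 = (\<lambda>x. hyp2F1 (-(2 / \<alpha>)) 1 (1 - 2 / \<alpha>) (- x) - C2 x - 1);
        c1 = C1 \<gamma> + pb * C2 \<gamma>;
        c2 = pb * C3 \<gamma> + 1;
        ps2 = (\<lambda>q. \<Sum>f=1..Nf. p f * q f / (c1 + c2 * q f));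
        qn = (\<lambda>\<nu> f. clip01 (sqrt c1 / (sqrt \<nu> * c2) * sqrt (p f) - c1 / c2))
    in (\<exists>\<nu>>0. (\<Sum>f=1..Nf. qn \<nu> f) = real Nc) \<and>
       (\<forall>\<nu>>0. (\<Sum>f=1..Nf. qn \<nu> f) = real Nc \<longrightarrow>
          qn \<nu> \<in> F \<and> (\<forall>q\<in>F. ps2 q \<le> ps2 (qn \<nu>)))"
proof -
  define \<delta> where "\<delta> = 2/\<alpha>"
  have d: "0 < \<delta>" "\<delta> < 1" unfolding \<delta>_def using assms(6) by auto
  define k where "k = lam1 / lam2 * (P1 / P2 * (B1 / B2)) powr (2 / \<alpha>)"
  have k: "k > 0" unfolding k_def using assms by simp
  define F where "F = feasible_set Nf Nc"
  define obj where "obj = (\<lambda>q. \<Sum>f=1..Nf. p f * q f / (k + q f))"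
  define Po where "Po = (SUP q\<in>F. obj q)"
  have zF: "(\<lambda>_. 0) \<in> F" unfolding F_def feasible_set_def by auto
  have bdd: "bdd_above (obj ` F)"
  proof (rule bdd_aboveI[of _ 1])
    fix y assume "y \<in> obj ` F"
    then obtain q where q: "q \<in> F" "y = obj q" by auto
    have "obj q \<le> (\<Sum>f=1..Nf. p f)" unfolding obj_def
    proof (rule sum_mono)
      fix f assume f: "f \<in> {1..Nf}"
      have qf: "0 \<le> q f" using q f unfolding F_def feasible_set_def by auto
      have pf: "p f > 0" using f assms(4) by auto
      have "q f / (k + q f) \<le> 1" using qf k by simp
      hence "p f * (q f / (k + q f)) \<le> p f * 1" using pf by (intro mult_left_mono) auto
      thus "p f * q f / (k + q f) \<le> p f" by simp
    qed
    thus "y \<le> 1" using q assms(5) by simp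
  qed
  have Po0: "Po \<ge> 0"
  proof -
    have "obj (\<lambda>_. 0) \<le> Po" unfolding Po_def by (rule cSUP_upper[OF zF bdd])
    thus ?thesis by (simp add: obj_def)
  qed
  define \<gamma> where "\<gamma> = 2 powr ((R0 / W) * (1 + 1.28 * lamu * Po / lam2)) - 1"
  have \<gamma>: "\<gamma> > 0"
  proof -
    have "0 \<le> 1.28 * lamu * Po / lam2" using assms Po0 by (intro divide_nonneg_pos mult_nonneg_nonneg) auto
    hence "(R0 / W) * (1 + 1.28 * lamu * Po / lam2) > 0" using assms by (intro mult_pos_pos) auto
    hence "1 < (2::real) powr ((R0 / W) * (1 + 1.28 * lamu * Po / lam2))" by (intro gr_one_powr) auto
    thus ?thesis unfolding \<gamma>_def by simp
  qed
  define pb where "pb = 1 - (1 + Po * lamu / (3.5 * lam2)) powr (-3.5)"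
  have pb: "0 \<le> pb" "pb < 1"
  proof -
    have b1: "1 \<le> 1 + Po * lamu / (3.5 * lam2)" using Po0 assms by simp
    have "(1 + Po * lamu / (3.5 * lam2)) powr (-3.5) \<le> 1 powr (-3.5)"
      using b1 by (intro powr_mono2') auto
    moreover have "(1 + Po * lamu / (3.5 * lam2)) powr (-3.5) > 0" using b1 by simp
    ultimately show "0 \<le> pb" "pb < 1" unfolding pb_def by auto
  qed
  define C2v where "C2v = Gamma (1 - 2 / \<alpha>) * Gamma (1 + 2 / \<alpha>) * \<gamma> powr (2 / \<alpha>)"
  have d': "0 < 2/\<alpha>" "2/\<alpha> < 1" using d by (simp_all add: \<delta>_def)
  have g1: "0 < 1 - 2/\<alpha>" "0 < 1 + 2/\<alpha>" using d' by linarith+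
  have C2v: "C2v > 0" unfolding C2v_def using \<gamma> by (intro mult_pos_pos Gamma_real_pos g1) simp
  define F1 where "F1 = hyp2F1 (-(2 / \<alpha>)) (real M1) (1 - 2 / \<alpha>) (- \<gamma> / (real M1 * (B1 / B2)))"
  have F1: "F1 \<ge> 1"
  proof -
    have "- \<gamma> / (real M1 * (B1 / B2)) = - (\<gamma> / (real M1 * (B1 / B2)))" by simp
    moreover have "\<gamma> / (real M1 * (B1 / B2)) > 0" using \<gamma> assms by simp
    ultimately show ?thesis unfolding F1_def using hypC1_pos[OF d, of "real M1" "\<gamma> / (real M1 * (B1 / B2))"] assms(7)
      unfolding \<delta>_def by simp
  qed
  define F3 where "F3 = hyp2F1 (-(2 / \<alpha>)) 1 (1 - 2 / \<alpha>) (- \<gamma>)"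
  have F3: "F3 \<ge> C2v" unfolding F3_def C2v_def using F3_ge[OF d \<gamma>] unfolding \<delta>_def by simp
  define c1 where "c1 = k * F1 + pb * C2v"
  define c2 where "c2 = pb * (F3 - C2v - 1) + 1"
  have c1: "c1 > 0" unfolding c1_def using k F1 pb C2v
    by (smt (verit) mult_nonneg_nonneg mult_pos_pos)
  have c2: "c2 > 0"
  proof -
    have "pb * (F3 - C2v - 1) \<ge> pb * (-1)" using F3 pb by (intro mult_left_mono) auto
    thus ?thesis unfolding c2_def using pb by simp
  qed
  note MA = main_abstract[OF assms(1-4) c1 c2]
  show ?thesis unfolding Let_def
    using MA unfolding c1_def c2_def k_def F1_def F3_def C2v_def pb_def \<gamma>_def Po_def obj_def F_def .
qed

end
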